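(* Let $\tilde F(\cdot)=\int S(t,\cdot)Y(dt)$ be a linear estimator of $F$, with bias $B_S(x)=\int S(t,x)F(t)dt-F(x)$ and stochastic part $\varepsilon Z_S(x)$, $Z_S(x)=\int S(t,x)W(dt)$, so that $\tilde F-F=B_S+\varepsilon Z_S$. Then for any $F\in\mathbb L_p(\mathcal D)\cap\mathbb L_2(\mathcal D)$ and $p\in[1,\infty]$, $$\frac14\{\|B_S\|_p+\varepsilon\mathbb E\|Z_S\|_p\}\le\mathcal R_p[\tilde F;F]\le\|B_S\|_p+\varepsilon\mathbb E\|Z_S\|_p.$$
   Context: $d\ge1$, $\varepsilon\in(0,1)$, $\mathcal D\subset\mathbb R^d$ an open box containing $\mathcal D_0=[-1/2,1/2]^d$. One observes $Y(dt)=F(t)dt+\varepsilon W(dt)$, $t\in\mathcal D$, $W$ a standard Brownian sheet; $\mathbb E_F$ expectation under the model, $\mathbb E$ expectation w.r.t. Wiener measure. $S:\mathcal D\times\mathcal D_0\to\mathbb R$ is a kernel. $\|\cdot\|_p$ is the $\mathbb L_p$-norm (over $\mathcal D_0$ for functions of $x$), and $\mathcal R_p[\tilde F;F]=\mathbb E_F\|\tilde F-F\|_p$. *)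

theory Defs
  imports "HOL-Probability.Probability"
begin

definition cube0 :: "(real ^ 'd) set" where
  "cube0 = cbox (- ((1/2) *\<^sub>R One)) ((1/2) *\<^sub>R One)"

definition Lp_norm :: "ennreal \<Rightarrow> ('a::euclidean_space) set \<Rightarrow> ('a \<Rightarrow> real) \<Rightarrow> ennreal" where
  "Lp_norm p A f =
     (if p = \<infinity> then esssup (lebesgue_on A) (\<lambda>x. ennreal \<bar>f x\<bar>)
      else (let N = (\<integral>\<^sup>+ x. ennreal (\<bar>f x\<bar> powr enn2real p) \<partial>lebesgue_on A)
            in if N = \<infinity> then \<infinity> else ennreal (enn2real N powr (1 / enn2real p))))"

definition L2_on :: "('a::euclidean_space) set \<Rightarrow> ('a \<Rightarrow> real) \<Rightarrow> bool" where
  "L2_on D f \<longleftrightarrow> f \<in> borel_measurable (lebesgue_on D) \<and> integrable (lebesgue_on D) (\<lambda>t. (f t)\<^sup>2)"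

text \<open>Wiener integral w.r.t. a standard Brownian sheet (white noise) on D, i.e. an isonormal
  Gaussian process indexed by L_2(D): g \<mapsto> \<integral> g(t) W(dt) is linear (a.s.) and
  N(0, integral of g squared) distributed (degenerate at 0 if that is 0).\<close>
definition wiener_integral_on :: "'w measure \<Rightarrow> ('a::euclidean_space) set \<Rightarrow> (('a \<Rightarrow> real) \<Rightarrow> 'w \<Rightarrow> real) \<Rightarrow> bool" where
  "wiener_integral_on M D I \<longleftrightarrow>
     (\<forall>g. L2_on D g \<longrightarrow>
        (let v = (\<integral>t. (g t)\<^sup>2 \<partial>lebesgue_on D) in
          I g \<in> borel_measurable M \<and>
          (if v = 0 then (AE \<omega> in M. I g \<omega> = 0)
           else distributed M lborel (I g) (normal_density 0 (sqrt v))))) \<and>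
     (\<forall>g h a b. L2_on D g \<longrightarrow> L2_on D h \<longrightarrow>
        (AE \<omega> in M. I (\<lambda>t. a * g t + b * h t) \<omega> = a * I g \<omega> + b * I h \<omega>))"

end

theory Submission
  imports Defs
begin


lemma powr_tangent:
  fixes c t q :: real assumes c: "0 \<le> c" and t: "0 \<le> t" and q: "1 \<le> q"
  shows "c powr q + q * c powr (q-1) * (t - c) \<le> t powr q"
proof (cases "c = 0")
  case True then show ?thesis using q by simp
next
  case False
  then have cp: "0 < c" using c by simp
  have cq: "c powr (q-1) * c = c powr q" using cp by (simp add: powr_diff)
  show ?thesis
  proof (cases "t = 0")
    case True
    have "c powr q + q * c powr (q-1) * (t - c) = (1 - q) * c powr q"
      using True cq by (simp add: algebra_simps)
    also have "\<dots> \<le> 0" using q by (simp add: mult_nonpos_nonneg)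
    finally show ?thesis using True by simp
  next
    case False
    then have tp: "0 < t" using t by simp
    have d: "((\<lambda>x. x powr q) has_field_derivative q * c powr (q-1)) (at c within {0<..})"
      using cp by (auto intro!: derivative_eq_intros)
    have "t powr q - c powr q \<ge> q * c powr (q-1) * (t - c)"
      by (rule convex_on_imp_above_tangent[OF powr_convex[OF q] _ _ _ d]) (use cp tp in \<open>auto simp: interior_open\<close>)
    then show ?thesis by simp
  qed
qed

lemma jensen_weighted:
  fixes w v :: "'w \<Rightarrow> real" and q :: real
  assumes M: "prob_space M"
    and wm: "w \<in> borel_measurable M" and wpos: "\<And>\<omega>. \<omega> \<in> space M \<Longrightarrow> 0 < w \<omega>"
    and wi: "integrable M w" and w1: "(\<integral>\<omega>. w \<omega> \<partial>M) = 1"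
    and vm: "v \<in> borel_measurable M" and vnn: "\<And>\<omega>. \<omega> \<in> space M \<Longrightarrow> 0 \<le> v \<omega>"
    and vi: "integrable M v" and q: "1 \<le> q"
  shows "ennreal ((\<integral>\<omega>. v \<omega> \<partial>M) powr q) \<le> (\<integral>\<^sup>+\<omega>. ennreal (w \<omega> powr (1-q) * v \<omega> powr q) \<partial>M)"
proof -
  interpret prob_space M by fact
  define c where "c = (\<integral>\<omega>. v \<omega> \<partial>M)"
  have c0: "0 \<le> c" unfolding c_def using vnn by (simp add: integral_nonneg_AE)
  have wnn: "\<And>\<omega>. \<omega> \<in> space M \<Longrightarrow> 0 \<le> w \<omega>" using wpos less_imp_le by blast
  have cq: "c powr (q-1) * c = c powr q"
    using c0 q by (cases "c = 0") (auto simp: powr_diff)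
  have pt: "w \<omega> * c powr q + q * c powr (q-1) * v \<omega> \<le> w \<omega> powr (1-q) * v \<omega> powr q + q * c powr q * w \<omega>"
    if om: "\<omega> \<in> space M" for \<omega>
  proof -
    have wp: "0 < w \<omega>" using wpos om .
    have tg: "c powr q + q * c powr (q-1) * (v \<omega> / w \<omega> - c) \<le> (v \<omega> / w \<omega>) powr q"
      by (rule powr_tangent) (use c0 q vnn[OF om] wp in auto)
    have "w \<omega> * (c powr q + q * c powr (q-1) * (v \<omega> / w \<omega> - c)) \<le> w \<omega> * (v \<omega> / w \<omega>) powr q"
      using tg wp by (simp add: mult_left_mono)
    moreover have "w \<omega> * (c powr q + q * c powr (q-1) * (v \<omega> / w \<omega> - c))
        = w \<omega> * c powr q + q * c powr (q-1) * v \<omega> - q * (c powr (q-1) * c) * w \<omega>"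
      using wp by (simp add: field_simps)
    moreover have "w \<omega> * (v \<omega> / w \<omega>) powr q = w \<omega> powr (1-q) * v \<omega> powr q"
      using wp vnn[OF om] by (simp add: powr_divide powr_diff field_simps)
    ultimately show ?thesis using cq by simp
  qed
  have int1: "integrable M (\<lambda>\<omega>. w \<omega> * c powr q + q * c powr (q-1) * v \<omega>)"
    using wi vi by auto
  have I1: "(\<integral>\<omega>. w \<omega> * c powr q + q * c powr (q-1) * v \<omega> \<partial>M) = c powr q + q * c powr q"
    using wi vi w1 cq by (simp add: c_def[symmetric] mult.commute)
  have "ennreal (c powr q + q * c powr q) = (\<integral>\<^sup>+\<omega>. ennreal (w \<omega> * c powr q + q * c powr (q-1) * v \<omega>) \<partial>M)"
    using I1 int1 wnn vnn q c0
    by (subst nn_integral_eq_integral) (auto intro!: AE_I2 add_nonneg_nonneg mult_nonneg_nonneg)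
  also have "\<dots> \<le> (\<integral>\<^sup>+\<omega>. ennreal (w \<omega> powr (1-q) * v \<omega> powr q) + ennreal (q * c powr q * w \<omega>) \<partial>M)"
  proof (intro nn_integral_mono)
    fix \<omega> assume om: "\<omega> \<in> space M"
    have "ennreal (w \<omega> * c powr q + q * c powr (q-1) * v \<omega>) \<le> ennreal (w \<omega> powr (1-q) * v \<omega> powr q + q * c powr q * w \<omega>)"
      using pt[OF om] by (rule ennreal_leI)
    also have "\<dots> = ennreal (w \<omega> powr (1-q) * v \<omega> powr q) + ennreal (q * c powr q * w \<omega>)"
      using wnn[OF om] q c0 by (intro ennreal_plus) auto
    finally show "ennreal (w \<omega> * c powr q + q * c powr (q-1) * v \<omega>) \<le> ennreal (w \<omega> powr (1-q) * v \<omega> powr q) + ennreal (q * c powr q * w \<omega>)" .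
  qed
  also have "\<dots> = (\<integral>\<^sup>+\<omega>. ennreal (w \<omega> powr (1-q) * v \<omega> powr q) \<partial>M) + (\<integral>\<^sup>+\<omega>. ennreal (q * c powr q * w \<omega>) \<partial>M)"
    using wm vm by (intro nn_integral_add) auto
  also have "(\<integral>\<^sup>+\<omega>. ennreal (q * c powr q * w \<omega>) \<partial>M) = ennreal (q * c powr q)"
    using wi w1 wnn q by (subst nn_integral_eq_integral) (auto intro!: AE_I2)
  finally have "ennreal (c powr q) + ennreal (q * c powr q) \<le> (\<integral>\<^sup>+\<omega>. ennreal (w \<omega> powr (1-q) * v \<omega> powr q) \<partial>M) + ennreal (q * c powr q)"
    using q c0 by (simp add: ennreal_plus[symmetric] del: ennreal_plus)
  then show ?thesis unfolding c_def[symmetric]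
    by (simp add: add.commute[of _ "ennreal (q * c powr q)"] ennreal_add_left_cancel_le)
qed

lemma powr_convex0:
  fixes x y l q :: real
  assumes x: "0 \<le> x" and y: "0 \<le> y" and l: "0 \<le> l" "l \<le> 1" and q: "1 \<le> q"
  shows "(l * x + (1 - l) * y) powr q \<le> l * x powr q + (1 - l) * y powr q"
proof -
  define m where "m = l * x + (1 - l) * y"
  have m0: "0 \<le> m" unfolding m_def using x y l by auto
  have t1: "m powr q + q * m powr (q-1) * (x - m) \<le> x powr q" by (rule powr_tangent) (use m0 x q in auto)
  have t2: "m powr q + q * m powr (q-1) * (y - m) \<le> y powr q" by (rule powr_tangent) (use m0 y q in auto)
  have "l * (m powr q + q * m powr (q-1) * (x - m)) + (1 - l) * (m powr q + q * m powr (q-1) * (y - m))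
        \<le> l * x powr q + (1 - l) * y powr q"
    using t1 t2 l by (intro add_mono mult_left_mono) auto
  moreover have "l * (m powr q + q * m powr (q-1) * (x - m)) + (1 - l) * (m powr q + q * m powr (q-1) * (y - m))
        = m powr q + q * m powr (q-1) * (l * x + (1 - l) * y - m)"
    by (simp add: algebra_simps)
  ultimately show ?thesis unfolding m_def by simp
qed

lemma powr_split_ineq:
  fixes u v l q :: real
  assumes l: "0 < l" "l < 1" and q: "1 \<le> q"
  shows "\<bar>u + v\<bar> powr q \<le> l powr (1-q) * \<bar>u\<bar> powr q + (1-l) powr (1-q) * \<bar>v\<bar> powr q"
proof -
  have "\<bar>u + v\<bar> powr q \<le> (\<bar>u\<bar> + \<bar>v\<bar>) powr q" using q by (intro powr_mono2) auto
  also have "\<bar>u\<bar> + \<bar>v\<bar> = l * (\<bar>u\<bar> / l) + (1 - l) * (\<bar>v\<bar> / (1 - l))" using l by simp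
  also have "(l * (\<bar>u\<bar> / l) + (1 - l) * (\<bar>v\<bar> / (1 - l))) powr q
      \<le> l * (\<bar>u\<bar> / l) powr q + (1 - l) * (\<bar>v\<bar> / (1 - l)) powr q"
    by (rule powr_convex0) (use l q in auto)
  also have "l * (\<bar>u\<bar> / l) powr q = l powr (1-q) * \<bar>u\<bar> powr q"
    using l by (simp add: powr_divide powr_diff field_simps)
  also have "(1 - l) * (\<bar>v\<bar> / (1 - l)) powr q = (1-l) powr (1-q) * \<bar>v\<bar> powr q"
    using l by (simp add: powr_divide powr_diff field_simps)
  finally show ?thesis .
qed

lemma powr_split_alg:
  fixes a b q :: real assumes "0 < a" "0 < b"
  shows "(a / (a + b)) powr (1 - q) * a powr q = a * (a + b) powr (q - 1)"
proof -
  have e: "q - 1 = -(1 - q)" by simp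
  have 1: "(a / (a + b)) powr (1 - q) = a powr (1 - q) * (a + b) powr (q - 1)"
  proof -
    have d: "(a+b) powr (q-1) * (a+b) powr (1-q) = 1" using assms by (simp add: powr_add[symmetric])
    have "(a / (a + b)) powr (1 - q) = a powr (1-q) / (a+b) powr (1-q)" using assms by (simp add: powr_divide)
    also have "\<dots> = a powr (1-q) * ((a+b) powr (q-1) * (a+b) powr (1-q)) / (a+b) powr (1-q)" using d by simp
    also have "\<dots> = a powr (1 - q) * (a + b) powr (q - 1)" using assms by simp
    finally show ?thesis .
  qed
  have 2: "a powr (1 - q) * a powr q = a" using assms by (simp add: powr_add[symmetric])
  show ?thesis unfolding 1 using 2 by (metis mult.commute mult.left_commute)
qed

definition LP :: "ennreal \<Rightarrow> 'a measure \<Rightarrow> ('a \<Rightarrow> real) \<Rightarrow> ennreal" where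
  "LP p N f =
     (if p = \<infinity> then esssup N (\<lambda>x. ennreal \<bar>f x\<bar>)
      else (let I = (\<integral>\<^sup>+ x. ennreal (\<bar>f x\<bar> powr enn2real p) \<partial>N)
            in if I = \<infinity> then \<infinity> else ennreal (enn2real I powr (1 / enn2real p))))"

lemma Lp_norm_LP: "Lp_norm p A f = LP p (lebesgue_on A) f"
  unfolding Lp_norm_def LP_def by simp

lemma enn2real_ge1: "1 \<le> p \<Longrightarrow> p \<noteq> \<infinity> \<Longrightarrow> 1 \<le> enn2real (p::ennreal)"
proof -
  assume a: "1 \<le> p" "p \<noteq> \<infinity>"
  have "p < \<top>" using a(2) unfolding infinity_ennreal_def by (rule less_top[THEN iffD1])
  from enn2real_mono[OF a(1) this] show ?thesis by simp
qed

lemma LP_fin: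
  "p \<noteq> \<infinity> \<Longrightarrow> LP p N f = (if (\<integral>\<^sup>+ x. ennreal (\<bar>f x\<bar> powr enn2real p) \<partial>N) = \<infinity> then \<infinity>
       else ennreal (enn2real (\<integral>\<^sup>+ x. ennreal (\<bar>f x\<bar> powr enn2real p) \<partial>N) powr (1 / enn2real p)))"
  unfolding LP_def by (simp add: Let_def)

lemma LP_le:
  assumes p: "p \<noteq> \<infinity>" "0 < enn2real p" and r: "0 \<le> r"
    and I: "(\<integral>\<^sup>+ x. ennreal (\<bar>f x\<bar> powr enn2real p) \<partial>N) \<le> ennreal (r powr enn2real p)"
  shows "LP p N f \<le> ennreal r"
proof -
  let ?I = "(\<integral>\<^sup>+ x. ennreal (\<bar>f x\<bar> powr enn2real p) \<partial>N)"
  have fin: "?I \<noteq> \<infinity>" using le_less_trans[OF I ennreal_less_top] by auto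
  have "enn2real ?I \<le> r powr enn2real p" using I by (simp add: enn2real_leI)
  then have "enn2real ?I powr (1 / enn2real p) \<le> (r powr enn2real p) powr (1 / enn2real p)"
    using p by (intro powr_mono2) auto
  also have "\<dots> = r" using p r by (simp add: powr_powr)
  finally show ?thesis using fin p by (simp add: LP_fin ennreal_leI)
qed

lemma LP_val:
  assumes "p \<noteq> \<infinity>" "(\<integral>\<^sup>+ x. ennreal (\<bar>f x\<bar> powr enn2real p) \<partial>N) \<noteq> \<infinity>"
  shows "LP p N f = ennreal (enn2real (\<integral>\<^sup>+ x. ennreal (\<bar>f x\<bar> powr enn2real p) \<partial>N) powr (1 / enn2real p))"
  using assms by (simp add: LP_fin)

lemma LP_add:
  fixes f g :: "'a \<Rightarrow> real"
  assumes fm[measurable]: "f \<in> borel_measurable N" and gm[measurable]: "g \<in> borel_measurable N" and p: "1 \<le> p"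
  shows "LP p N (\<lambda>x. f x + g x) \<le> LP p N f + LP p N g"
proof (cases "p = \<infinity>")
  case True
  have "esssup N (\<lambda>x. ennreal \<bar>f x + g x\<bar>) \<le> esssup N (\<lambda>x. ennreal \<bar>f x\<bar>) + esssup N (\<lambda>x. ennreal \<bar>g x\<bar>)"
  proof (rule esssup_I)
    show "(\<lambda>x. ennreal \<bar>f x + g x\<bar>) \<in> borel_measurable N" by measurable
    show "AE x in N. ennreal \<bar>f x + g x\<bar> \<le> esssup N (\<lambda>x. ennreal \<bar>f x\<bar>) + esssup N (\<lambda>x. ennreal \<bar>g x\<bar>)"
      using esssup_AE[of "\<lambda>x. ennreal \<bar>f x\<bar>" N] esssup_AE[of "\<lambda>x. ennreal \<bar>g x\<bar>" N]
    proof eventually_elim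
      case (elim x)
      have "ennreal \<bar>f x + g x\<bar> \<le> ennreal (\<bar>f x\<bar> + \<bar>g x\<bar>)" by (intro ennreal_leI) simp
      also have "\<dots> = ennreal \<bar>f x\<bar> + ennreal \<bar>g x\<bar>" by (simp add: ennreal_plus)
      also have "\<dots> \<le> esssup N (\<lambda>x. ennreal \<bar>f x\<bar>) + esssup N (\<lambda>x. ennreal \<bar>g x\<bar>)" using elim by (intro add_mono)
      finally show ?case .
    qed
  qed
  then show ?thesis using True by (simp add: LP_def)
next
  case False
  define q where "q = enn2real p"
  have q1: "1 \<le> q" unfolding q_def using p False by (rule enn2real_ge1)
  define If where "If = (\<integral>\<^sup>+ x. ennreal (\<bar>f x\<bar> powr q) \<partial>N)"
  define Ig where "Ig = (\<integral>\<^sup>+ x. ennreal (\<bar>g x\<bar> powr q) \<partial>N)"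
  show ?thesis
  proof (cases "If = \<infinity> \<or> Ig = \<infinity>")
    case True
    then have "LP p N f = \<infinity> \<or> LP p N g = \<infinity>" using False by (auto simp: LP_fin If_def Ig_def q_def)
    then show ?thesis by auto
  next
    case fin: False
    define a where "a = enn2real If powr (1/q)"
    define b where "b = enn2real Ig powr (1/q)"
    have a0: "0 \<le> a" and b0: "0 \<le> b" unfolding a_def b_def by auto
    have LPf: "LP p N f = ennreal a" using fin False by (simp add: LP_fin If_def a_def q_def)
    have LPg: "LP p N g = ennreal b" using fin False by (simp add: LP_fin Ig_def b_def q_def)
    have ea: "a powr q = enn2real If" unfolding a_def using q1 by (simp add: powr_powr)
    have "If < \<top>" using fin by (intro less_top[THEN iffD1]) auto
    from ennreal_enn2real[OF this] ea have Ifa: "If = ennreal (a powr q)" by simp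
    have eb: "b powr q = enn2real Ig" unfolding b_def using q1 by (simp add: powr_powr)
    have "Ig < \<top>" using fin by (intro less_top[THEN iffD1]) auto
    from ennreal_enn2real[OF this] eb have Igb: "Ig = ennreal (b powr q)" by simp
    have zero: "(\<integral>\<^sup>+ x. ennreal (\<bar>h x + k x\<bar> powr q) \<partial>N) = (\<integral>\<^sup>+ x. ennreal (\<bar>k x\<bar> powr q) \<partial>N)"
      if hm: "h \<in> borel_measurable N" and h0: "(\<integral>\<^sup>+ x. ennreal (\<bar>h x\<bar> powr q) \<partial>N) = 0" for h k :: "'a \<Rightarrow> real"
    proof -
      have "AE x in N. ennreal (\<bar>h x\<bar> powr q) = 0"
        using h0 hm by (subst (asm) nn_integral_0_iff_AE) auto
      then have "AE x in N. h x = 0" by eventually_elim simp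
      then show ?thesis by (intro nn_integral_cong_AE) auto
    qed
    have key: "(\<integral>\<^sup>+ x. ennreal (\<bar>f x + g x\<bar> powr q) \<partial>N) \<le> ennreal ((a + b) powr q)"
    proof (cases "a = 0 \<or> b = 0")
      case True
      then show ?thesis
      proof
        assume a: "a = 0"
        then have "If = 0" using Ifa q1 by simp
        then have "(\<integral>\<^sup>+ x. ennreal (\<bar>f x + g x\<bar> powr q) \<partial>N) = Ig"
          unfolding Ig_def by (intro zero) (auto simp: If_def)
        then show ?thesis using Igb a by simp
      next
        assume b: "b = 0"
        then have "Ig = 0" using Igb q1 by simp
        then have "(\<integral>\<^sup>+ x. ennreal (\<bar>g x + f x\<bar> powr q) \<partial>N) = If"
          unfolding If_def by (intro zero) (auto simp: Ig_def)
        then show ?thesis using Ifa b by (simp add: add.commute)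
      qed
    next
      case False
      then have ap: "0 < a" and bp: "0 < b" using a0 b0 by auto
      define l where "l = a / (a + b)"
      have l: "0 < l" "l < 1" unfolding l_def using ap bp by auto
      have l1: "1 - l = b / (a + b)" unfolding l_def using ap bp by (simp add: field_simps)
      have "(\<integral>\<^sup>+ x. ennreal (\<bar>f x + g x\<bar> powr q) \<partial>N)
          \<le> (\<integral>\<^sup>+ x. ennreal (l powr (1-q)) * ennreal (\<bar>f x\<bar> powr q) + ennreal ((1-l) powr (1-q)) * ennreal (\<bar>g x\<bar> powr q) \<partial>N)"
      proof (intro nn_integral_mono)
        fix x
        have "ennreal (\<bar>f x + g x\<bar> powr q) \<le> ennreal (l powr (1-q) * \<bar>f x\<bar> powr q + (1-l) powr (1-q) * \<bar>g x\<bar> powr q)"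
          using powr_split_ineq[OF l q1] by (intro ennreal_leI)
        also have "\<dots> = ennreal (l powr (1-q)) * ennreal (\<bar>f x\<bar> powr q) + ennreal ((1-l) powr (1-q)) * ennreal (\<bar>g x\<bar> powr q)"
          by (simp add: ennreal_mult')
        finally show "ennreal (\<bar>f x + g x\<bar> powr q) \<le> ennreal (l powr (1-q)) * ennreal (\<bar>f x\<bar> powr q) + ennreal ((1-l) powr (1-q)) * ennreal (\<bar>g x\<bar> powr q)" .
      qed
      also have "\<dots> = ennreal (l powr (1-q)) * If + ennreal ((1-l) powr (1-q)) * Ig"
        unfolding If_def Ig_def by (subst nn_integral_add) (auto simp: nn_integral_cmult)
      also have "\<dots> = ennreal (l powr (1-q) * a powr q + (1-l) powr (1-q) * b powr q)"
        unfolding Ifa Igb by (simp add: ennreal_mult')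
      also have "l powr (1-q) * a powr q + (1-l) powr (1-q) * b powr q = a * (a + b) powr (q - 1) + b * (a + b) powr (q - 1)"
        unfolding l1 unfolding l_def using powr_split_alg[OF ap bp] powr_split_alg[OF bp ap]
        by (simp add: add.commute)
      also have "\<dots> = (a + b) * (a + b) powr (q - 1)" by (simp add: algebra_simps)
      also have "\<dots> = (a + b) powr q" using ap bp by (simp add: powr_diff)
      finally show ?thesis .
    qed
    have "LP p N (\<lambda>x. f x + g x) \<le> ennreal (a + b)"
      using False q1 a0 b0 key by (intro LP_le) (auto simp: q_def)
    then show ?thesis using LPf LPg a0 b0 by (simp add: ennreal_plus)
  qed
qed



lemma LP_uminus: "LP p N (\<lambda>x. - f x) = LP p N f"
  by (simp add: LP_def)

lemma LP_cmult:
  fixes f :: "'a \<Rightarrow> real"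
  assumes fm[measurable]: "f \<in> borel_measurable N" and c: "0 < c" and p: "1 \<le> p"
  shows "LP p N (\<lambda>x. c * f x) = ennreal c * LP p N f"
proof (cases "p = \<infinity>")
  case True
  let ?E = "esssup N (\<lambda>x. ennreal \<bar>f x\<bar>)"
  let ?Ec = "esssup N (\<lambda>x. ennreal \<bar>c * f x\<bar>)"
  have le: "?Ec \<le> ennreal c * ?E"
  proof (rule esssup_I)
    show "(\<lambda>x. ennreal \<bar>c * f x\<bar>) \<in> borel_measurable N" by measurable
    show "AE x in N. ennreal \<bar>c * f x\<bar> \<le> ennreal c * ?E"
      using esssup_AE[of "\<lambda>x. ennreal \<bar>f x\<bar>" N]
    proof eventually_elim
      case (elim x)
      have "ennreal \<bar>c * f x\<bar> = ennreal c * ennreal \<bar>f x\<bar>" using c by (simp add: abs_mult ennreal_mult)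
      also have "\<dots> \<le> ennreal c * ?E" using elim by (rule mult_left_mono) simp
      finally show ?case .
    qed
  qed
  have ge: "?E \<le> ennreal (1/c) * ?Ec"
  proof (rule esssup_I)
    show "(\<lambda>x. ennreal \<bar>f x\<bar>) \<in> borel_measurable N" by measurable
    show "AE x in N. ennreal \<bar>f x\<bar> \<le> ennreal (1/c) * ?Ec"
      using esssup_AE[of "\<lambda>x. ennreal \<bar>c * f x\<bar>" N]
    proof eventually_elim
      case (elim x)
      have "ennreal \<bar>f x\<bar> = ennreal (1/c) * ennreal \<bar>c * f x\<bar>" using c
        by (simp add: abs_mult ennreal_mult[symmetric])
      also have "\<dots> \<le> ennreal (1/c) * ?Ec" using elim by (rule mult_left_mono) simp
      finally show ?case .
    qed
  qed
  have "ennreal c * ?E \<le> ennreal c * (ennreal (1/c) * ?Ec)" using ge by (rule mult_left_mono) simp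
  also have "\<dots> = ?Ec" using c by (simp add: mult.assoc[symmetric] ennreal_mult[symmetric])
  finally have "ennreal c * ?E \<le> ?Ec" .
  with le have "?Ec = ennreal c * ?E" by (rule antisym)
  then show ?thesis using True by (simp add: LP_def)
next
  case False
  define q where "q = enn2real p"
  have q1: "1 \<le> q" unfolding q_def using p False by (rule enn2real_ge1)
  define If where "If = (\<integral>\<^sup>+ x. ennreal (\<bar>f x\<bar> powr q) \<partial>N)"
  have Ic: "(\<integral>\<^sup>+ x. ennreal (\<bar>c * f x\<bar> powr q) \<partial>N) = ennreal (c powr q) * If"
  proof -
    have "(\<integral>\<^sup>+ x. ennreal (\<bar>c * f x\<bar> powr q) \<partial>N) = (\<integral>\<^sup>+ x. ennreal (c powr q) * ennreal (\<bar>f x\<bar> powr q) \<partial>N)"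
      using c by (intro nn_integral_cong) (simp add: abs_mult powr_mult ennreal_mult)
    also have "\<dots> = ennreal (c powr q) * If" unfolding If_def by (rule nn_integral_cmult) measurable
    finally show ?thesis .
  qed
  show ?thesis
  proof (cases "If = \<infinity>")
    case True
    then show ?thesis using False c Ic
      by (simp add: LP_fin q_def[symmetric] If_def[symmetric] ennreal_mult_eq_top_iff)
  next
    case fin: False
    have cfin: "ennreal (c powr q) * If \<noteq> \<infinity>" using fin by (simp add: ennreal_mult_eq_top_iff)
    have "enn2real (ennreal (c powr q) * If) powr (1/q) = c * enn2real If powr (1/q)"
      using c q1 by (simp add: enn2real_mult powr_mult powr_powr)
    then show ?thesis using False c Ic fin cfin
      by (simp add: LP_fin q_def[symmetric] If_def[symmetric] ennreal_mult)
  qed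
qed

lemma measurable_LP:
  fixes G :: "'a \<Rightarrow> 'b \<Rightarrow> real"
  assumes Gm[measurable]: "(\<lambda>(x, \<omega>). G x \<omega>) \<in> borel_measurable (N \<Otimes>\<^sub>M M)"
    and sf: "sigma_finite_measure N"
  shows "(\<lambda>\<omega>. LP p N (\<lambda>x. G x \<omega>)) \<in> borel_measurable M"
proof -
  interpret N: sigma_finite_measure N by fact
  have G'[measurable]: "(\<lambda>(\<omega>, x). G x \<omega>) \<in> borel_measurable (M \<Otimes>\<^sub>M N)"
    using measurable_pair_swap[OF Gm] by simp
  show ?thesis
  proof (cases "p = \<infinity>")
    case False
    have "(\<lambda>\<omega>. \<integral>\<^sup>+ x. ennreal (\<bar>G x \<omega>\<bar> powr enn2real p) \<partial>N) \<in> borel_measurable M"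
      by measurable
    then show ?thesis using False by (simp add: LP_fin)
  next
    case True
    have "(\<lambda>\<omega>. esssup N (\<lambda>x. ennreal \<bar>G x \<omega>\<bar>)) \<in> borel_measurable M"
    proof (rule borel_measurableI_less)
      fix y :: ennreal
      define S where "S r = {\<omega>\<in>space M. ennreal (real_of_rat r) < y \<and>
          emeasure N {x\<in>space N. ennreal (real_of_rat r) < ennreal \<bar>G x \<omega>\<bar>} = 0}" for r
      have Sm: "S r \<in> sets M" for r
      proof -
        have "(\<lambda>\<omega>. emeasure N {x\<in>space N. ennreal (real_of_rat r) < ennreal \<bar>G x \<omega>\<bar>}) \<in> borel_measurable M"
          by measurable
        then show ?thesis unfolding S_def by measurable
      qed
      have fm: "(\<lambda>x. ennreal \<bar>G x \<omega>\<bar>) \<in> borel_measurable N" if "\<omega> \<in> space M" for \<omega>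
      proof -
        have [measurable]: "(\<lambda>x. G x \<omega>) \<in> borel_measurable N" using measurable_Pair1[OF Gm that] by simp
        show ?thesis by measurable
      qed
      have eq: "{\<omega>\<in>space M. esssup N (\<lambda>x. ennreal \<bar>G x \<omega>\<bar>) < y} = (\<Union>r. S r)"
      proof (intro set_eqI iffI)
        fix \<omega> assume "\<omega> \<in> {\<omega>\<in>space M. esssup N (\<lambda>x. ennreal \<bar>G x \<omega>\<bar>) < y}"
        then have om: "\<omega> \<in> space M" and lt: "esssup N (\<lambda>x. ennreal \<bar>G x \<omega>\<bar>) < y" by auto
        obtain r :: rat where r1: "esssup N (\<lambda>x. ennreal \<bar>G x \<omega>\<bar>) < ennreal (real_of_rat r)"
          and r2: "ennreal (real_of_rat r) < y"
          using ennreal_rat_dense[OF lt] by blast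
        have "AE x in N. ennreal \<bar>G x \<omega>\<bar> \<le> esssup N (\<lambda>x. ennreal \<bar>G x \<omega>\<bar>)" by (rule esssup_AE)
        then have "AE x in N. \<not> ennreal (real_of_rat r) < ennreal \<bar>G x \<omega>\<bar>"
          by eventually_elim (use r1 in auto)
        then have "emeasure N {x\<in>space N. ennreal (real_of_rat r) < ennreal \<bar>G x \<omega>\<bar>} = 0"
          using fm[OF om] by (subst (asm) AE_iff_measurable[OF _ refl]) auto
        then show "\<omega> \<in> (\<Union>r. S r)" using om r2 unfolding S_def by blast
      next
        fix \<omega> assume "\<omega> \<in> (\<Union>r. S r)"
        then obtain r where om: "\<omega> \<in> space M" and r2: "ennreal (real_of_rat r) < y"
          and z: "emeasure N {x\<in>space N. ennreal (real_of_rat r) < ennreal \<bar>G x \<omega>\<bar>} = 0"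
          unfolding S_def by blast
        have "AE x in N. \<not> ennreal (real_of_rat r) < ennreal \<bar>G x \<omega>\<bar>"
          using fm[OF om] z by (subst AE_iff_measurable[OF _ refl]) auto
        then have "esssup N (\<lambda>x. ennreal \<bar>G x \<omega>\<bar>) \<le> ennreal (real_of_rat r)"
          using fm[OF om] by (intro esssup_I) (auto elim!: eventually_mono simp: not_less)
        then show "\<omega> \<in> {\<omega>\<in>space M. esssup N (\<lambda>x. ennreal \<bar>G x \<omega>\<bar>) < y}"
          using om r2 by auto
      qed
      show "{\<omega>\<in>space M. esssup N (\<lambda>x. ennreal \<bar>G x \<omega>\<bar>) < y} \<in> sets M"
        unfolding eq using Sm by (intro sets.countable_UN) auto
    qed
    then show ?thesis using True by (simp add: LP_def)
  qed
qed



lemma weight_ineq: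
  fixes h d K q :: real
  assumes h: "0 \<le> h" and d: "0 < d" and K: "0 < K" and q: "1 \<le> q"
  shows "((h + d) / K) powr (1 - q) * h powr q \<le> K powr (q - 1) * (h + d)"
proof -
  have hd: "0 < h + d" using h d by simp
  have e1: "((h + d) / K) powr (1 - q) = (h + d) powr (1 - q) * K powr (q - 1)"
  proof -
    have dd: "K powr (q-1) * K powr (1-q) = 1" using K by (simp add: powr_add[symmetric])
    have "((h + d) / K) powr (1 - q) = (h + d) powr (1-q) / K powr (1-q)" using hd K by (simp add: powr_divide)
    also have "\<dots> = (h + d) powr (1-q) * (K powr (q-1) * K powr (1-q)) / K powr (1-q)" using dd by simp
    also have "\<dots> = (h + d) powr (1 - q) * K powr (q - 1)" using K by simp
    finally show ?thesis .
  qed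
  have "h powr q \<le> (h + d) powr q" using h d q by (intro powr_mono2) auto
  then have "(h + d) powr (1 - q) * h powr q \<le> (h + d) powr (1 - q) * (h + d) powr q"
    by (rule mult_left_mono) simp
  also have "\<dots> = h + d" using hd by (simp add: powr_add[symmetric])
  finally have "(h + d) powr (1 - q) * h powr q \<le> h + d" .
  then have "K powr (q - 1) * ((h + d) powr (1 - q) * h powr q) \<le> K powr (q - 1) * (h + d)"
    by (rule mult_left_mono) simp
  then show ?thesis unfolding e1 by (simp add: mult_ac)
qed

lemma minkowski_integral:
  fixes Y :: "'a \<Rightarrow> 'b \<Rightarrow> real" and B :: "'a \<Rightarrow> real"
  assumes M: "prob_space M" and N: "sigma_finite_measure N"
    and Ym[measurable]: "(\<lambda>(x, \<omega>). Y x \<omega>) \<in> borel_measurable (N \<Otimes>\<^sub>M M)"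
    and Bm[measurable]: "B \<in> borel_measurable N"
    and Yi: "\<And>x. x \<in> space N \<Longrightarrow> integrable M (Y x)"
    and BY: "\<And>x. x \<in> space N \<Longrightarrow> B x = (\<integral>\<omega>. Y x \<omega> \<partial>M)"
    and p: "1 \<le> p"
  shows "LP p N B \<le> (\<integral>\<^sup>+\<omega>. LP p N (\<lambda>x. Y x \<omega>) \<partial>M)"
proof -
  interpret M: prob_space M by fact
  interpret N: sigma_finite_measure N by fact
  interpret P: pair_sigma_finite N M by unfold_locales
  have Y'[measurable]: "(\<lambda>(\<omega>, x). Y x \<omega>) \<in> borel_measurable (M \<Otimes>\<^sub>M N)"
    using measurable_pair_swap[OF Ym] by simp
  have hm[measurable]: "(\<lambda>\<omega>. LP p N (\<lambda>x. Y x \<omega>)) \<in> borel_measurable M"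
    by (rule measurable_LP[OF Ym N])
  define m where "m = (\<integral>\<^sup>+\<omega>. LP p N (\<lambda>x. Y x \<omega>) \<partial>M)"
  have Yx[measurable]: "Y x \<in> borel_measurable M" if "x \<in> space N" for x
    using measurable_Pair2[OF Ym that] by simp
  have absB: "ennreal \<bar>B x\<bar> \<le> (\<integral>\<^sup>+\<omega>. ennreal \<bar>Y x \<omega>\<bar> \<partial>M)" if x: "x \<in> space N" for x
  proof -
    have "\<bar>B x\<bar> \<le> (\<integral>\<omega>. \<bar>Y x \<omega>\<bar> \<partial>M)" using BY[OF x] Yi[OF x] by (simp add: integral_abs_bound)
    then have "ennreal \<bar>B x\<bar> \<le> ennreal (\<integral>\<omega>. \<bar>Y x \<omega>\<bar> \<partial>M)" by (rule ennreal_leI)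
    also have "\<dots> = (\<integral>\<^sup>+\<omega>. ennreal \<bar>Y x \<omega>\<bar> \<partial>M)"
      using Yi[OF x] by (subst nn_integral_eq_integral) auto
    finally show ?thesis .
  qed
  show ?thesis
  proof (cases "m = \<infinity>")
    case True then show ?thesis unfolding m_def by simp
  next
    case mfin: False
    show ?thesis
    proof (cases "p = \<infinity>")
      case True
      let ?h = "\<lambda>\<omega>. LP p N (\<lambda>x. Y x \<omega>)"
      have hdef: "?h \<omega> = esssup N (\<lambda>x. ennreal \<bar>Y x \<omega>\<bar>)" for \<omega> using True by (simp add: LP_def)
      have "AE \<omega> in M. AE x in N. ennreal \<bar>Y x \<omega>\<bar> \<le> ?h \<omega>"
        unfolding hdef by (intro AE_I2 esssup_AE)
      then have "AE x in N. AE \<omega> in M. ennreal \<bar>Y x \<omega>\<bar> \<le> ?h \<omega>"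
        by (subst P.AE_commute) measurable
      then have "AE x in N. ennreal \<bar>B x\<bar> \<le> m"
      proof (rule AE_mp[OF _ AE_I2], intro impI)
        fix x assume x: "x \<in> space N" and ae: "AE \<omega> in M. ennreal \<bar>Y x \<omega>\<bar> \<le> ?h \<omega>"
        have "ennreal \<bar>B x\<bar> \<le> (\<integral>\<^sup>+\<omega>. ennreal \<bar>Y x \<omega>\<bar> \<partial>M)" by (rule absB[OF x])
        also have "\<dots> \<le> m" unfolding m_def by (rule nn_integral_mono_AE[OF ae])
        finally show "ennreal \<bar>B x\<bar> \<le> m" .
      qed
      then have "esssup N (\<lambda>x. ennreal \<bar>B x\<bar>) \<le> m" by (intro esssup_I) measurable
      then show ?thesis using True by (simp add: LP_def m_def)
    next
      case False
      define q where "q = enn2real p"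
      have q1: "1 \<le> q" unfolding q_def using p False by (rule enn2real_ge1)
      define H where "H \<omega> = (\<integral>\<^sup>+x. ennreal (\<bar>Y x \<omega>\<bar> powr q) \<partial>N)" for \<omega>
      define hr where "hr \<omega> = enn2real (LP p N (\<lambda>x. Y x \<omega>))" for \<omega>
      have hr0: "0 \<le> hr \<omega>" for \<omega> unfolding hr_def by simp
      have hrm[measurable]: "hr \<in> borel_measurable M" unfolding hr_def by measurable
      have aefin: "AE \<omega> in M. LP p N (\<lambda>x. Y x \<omega>) \<noteq> \<infinity>"
        using mfin unfolding m_def by (intro nn_integral_PInf_AE) auto
      have aeH: "AE \<omega> in M. H \<omega> = ennreal (hr \<omega> powr q)"
        using aefin
      proof eventually_elim
        case (elim \<omega>)
        then have Hf: "H \<omega> \<noteq> \<infinity>" using False by (auto simp: LP_fin H_def q_def)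
        have "hr \<omega> = enn2real (H \<omega>) powr (1/q)" using Hf False
          by (simp add: hr_def LP_fin H_def q_def)
        then have "hr \<omega> powr q = enn2real (H \<omega>)" using q1 by (simp add: powr_powr)
        moreover have "H \<omega> < \<top>" using Hf by (simp add: top.not_eq_extremum)
        ultimately show ?case using ennreal_enn2real by metis
      qed
      have aeh: "AE \<omega> in M. LP p N (\<lambda>x. Y x \<omega>) = ennreal (hr \<omega>)"
        using aefin by eventually_elim (simp add: hr_def top.not_eq_extremum)
      have mhr: "m = (\<integral>\<^sup>+\<omega>. ennreal (hr \<omega>) \<partial>M)"
        unfolding m_def by (rule nn_integral_cong_AE[OF aeh])
      have hri: "integrable M hr"
        using mfin mhr hr0 by (intro integrableI_nonneg) (auto simp: top.not_eq_extremum)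
      define mr where "mr = (\<integral>\<omega>. hr \<omega> \<partial>M)"
      have mr0: "0 \<le> mr" unfolding mr_def using hr0 by simp
      have mmr: "m = ennreal mr" unfolding mhr mr_def using hri hr0 by (subst nn_integral_eq_integral) auto
      have main: "LP p N B \<le> ennreal (mr + d)" if d: "0 < d" for d
      proof -
        define K where "K = mr + d"
        have K: "0 < K" unfolding K_def using mr0 d by simp
        define w where "w \<omega> = (hr \<omega> + d) / K" for \<omega>
        have wpos: "0 < w \<omega>" for \<omega> unfolding w_def using hr0[of \<omega>] d K by simp
        have wm[measurable]: "w \<in> borel_measurable M" unfolding w_def by measurable
        have wi: "integrable M w" unfolding w_def using hri by auto
        have w1: "(\<integral>\<omega>. w \<omega> \<partial>M) = 1" unfolding w_def using hri K
          by (simp add: mr_def[symmetric] K_def M.prob_space)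
        have "(\<integral>\<^sup>+x. ennreal (\<bar>B x\<bar> powr q) \<partial>N)
            \<le> (\<integral>\<^sup>+x. (\<integral>\<^sup>+\<omega>. ennreal (w \<omega> powr (1-q) * \<bar>Y x \<omega>\<bar> powr q) \<partial>M) \<partial>N)"
        proof (rule nn_integral_mono)
          fix x assume x: "x \<in> space N"
          have "\<bar>B x\<bar> \<le> (\<integral>\<omega>. \<bar>Y x \<omega>\<bar> \<partial>M)" using BY[OF x] Yi[OF x] by (simp add: integral_abs_bound)
          then have "ennreal (\<bar>B x\<bar> powr q) \<le> ennreal ((\<integral>\<omega>. \<bar>Y x \<omega>\<bar> \<partial>M) powr q)"
            using q1 by (intro ennreal_leI powr_mono2) auto
          also have "\<dots> \<le> (\<integral>\<^sup>+\<omega>. ennreal (w \<omega> powr (1-q) * \<bar>Y x \<omega>\<bar> powr q) \<partial>M)"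
            by (rule jensen_weighted[OF M wm _ wi w1 _ _ _ q1]) (use wpos Yi[OF x] Yx[OF x] in auto)
          finally show "ennreal (\<bar>B x\<bar> powr q) \<le> (\<integral>\<^sup>+\<omega>. ennreal (w \<omega> powr (1-q) * \<bar>Y x \<omega>\<bar> powr q) \<partial>M)" .
        qed
        also have "\<dots> = (\<integral>\<^sup>+\<omega>. (\<integral>\<^sup>+x. ennreal (w \<omega> powr (1-q) * \<bar>Y x \<omega>\<bar> powr q) \<partial>N) \<partial>M)"
          by (rule P.Fubini'[symmetric]) measurable
        also have "\<dots> = (\<integral>\<^sup>+\<omega>. ennreal (w \<omega> powr (1-q)) * H \<omega> \<partial>M)"
          unfolding H_def
          by (intro nn_integral_cong, subst nn_integral_cmult[symmetric]) (auto simp: ennreal_mult)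
        also have "\<dots> = (\<integral>\<^sup>+\<omega>. ennreal (w \<omega> powr (1-q) * hr \<omega> powr q) \<partial>M)"
          using aeH by (intro nn_integral_cong_AE) (auto elim!: eventually_mono simp: ennreal_mult)
        also have "\<dots> \<le> (\<integral>\<^sup>+\<omega>. ennreal (K powr (q-1) * (hr \<omega> + d)) \<partial>M)"
          unfolding w_def using weight_ineq[OF hr0 d K q1]
          by (intro nn_integral_mono ennreal_leI) auto
        also have "\<dots> = ennreal (K powr (q-1) * (mr + d))"
          using hri K hr0 d by (subst nn_integral_eq_integral) (auto simp: mr_def M.prob_space intro!: add_nonneg_nonneg)
        also have "\<dots> = ennreal (K powr q)"
          using K unfolding K_def[symmetric] by (simp add: powr_diff)
        finally have I: "(\<integral>\<^sup>+x. ennreal (\<bar>B x\<bar> powr q) \<partial>N) \<le> ennreal (K powr q)" .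
        show ?thesis unfolding K_def[symmetric]
          using I False q1 K by (intro LP_le) (auto simp: q_def)
      qed
      have "LP p N B \<le> ennreal mr"
      proof (rule ennreal_le_epsilon)
        fix e :: real assume "0 < e"
        then show "LP p N B \<le> ennreal mr + ennreal e" using main[of e] mr0 by (simp add: ennreal_plus)
      qed
      then show ?thesis using mmr m_def by simp
    qed
  qed
qed



lemma sf_lebesgue_on:
  assumes S: "S \<in> sets borel" and fin: "emeasure lborel S < \<infinity>"
  shows "sigma_finite_measure (lebesgue_on S)"
proof -
  have "finite_measure (lebesgue_on S)"
  proof (rule finite_measureI)
    have Sl: "S \<in> sets lebesgue" using S by simp
    have "emeasure (lebesgue_on S) (space (lebesgue_on S)) = emeasure lebesgue S"
      using Sl by (simp add: space_restrict_space emeasure_restrict_space)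
    also have "\<dots> = emeasure lborel S" using S by simp
    finally show "emeasure (lebesgue_on S) (space (lebesgue_on S)) \<noteq> \<infinity>" using fin by simp
  qed
  then show ?thesis by (simp add: finite_measure_def)
qed

lemma gauss_mean0:
  fixes M :: "'w measure" and I :: "(real ^ 'd \<Rightarrow> real) \<Rightarrow> 'w \<Rightarrow> real"
  assumes M: "prob_space M" and W: "wiener_integral_on M D I" and g: "L2_on D g"
    and Zm: "Zx \<in> borel_measurable M" and Z: "AE \<omega> in M. Zx \<omega> = I g \<omega>"
  shows "integrable M Zx \<and> (\<integral>\<omega>. Zx \<omega> \<partial>M) = 0"
proof -
  interpret prob_space M by fact
  define v where "v = (\<integral>t. (g t)\<^sup>2 \<partial>lebesgue_on D)"
  have W1: "I g \<in> borel_measurable M \<and>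
          (if v = 0 then (AE \<omega> in M. I g \<omega> = 0)
           else distributed M lborel (I g) (normal_density 0 (sqrt v)))"
    using W g unfolding wiener_integral_on_def v_def by (auto simp: Let_def)
  show ?thesis
  proof (cases "v = 0")
    case True
    then have "AE \<omega> in M. Zx \<omega> = 0" using W1 Z by auto
    then have ae: "AE \<omega> in M. Zx \<omega> = (\<lambda>_. 0::real) \<omega>" by simp
    have "integrable M Zx" using integrable_cong_AE[OF Zm _ ae] by simp
    moreover have "(\<integral>\<omega>. Zx \<omega> \<partial>M) = 0" using integral_cong_AE[OF Zm _ ae] by simp
    ultimately show ?thesis by simp
  next
    case False
    have v0: "0 \<le> v" unfolding v_def by simp
    then have vp: "0 < sqrt v" using False by simp
    have D: "distributed M lborel (I g) (normal_density 0 (sqrt v))" using W1 False by simp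
    have ii: "integrable M (I g)"
      using distributed_integrable_var[OF D] integrable_normal_moment_nz_1[OF vp] by auto
    have ei: "(\<integral>\<omega>. I g \<omega> \<partial>M) = 0"
      using normal_distributed_expectation[OF vp D] .
    have Igm: "I g \<in> borel_measurable M" using W1 by simp
    have "integrable M Zx = integrable M (I g)" by (rule integrable_cong_AE[OF Zm Igm Z])
    moreover have "(\<integral>\<omega>. Zx \<omega> \<partial>M) = (\<integral>\<omega>. I g \<omega> \<partial>M)" by (rule integral_cong_AE[OF Zm Igm Z])
    ultimately have "integrable M Zx = integrable M (I g)" and "(\<integral>\<omega>. Zx \<omega> \<partial>M) = (\<integral>\<omega>. I g \<omega> \<partial>M)" by auto
    then show ?thesis using ii ei by simp
  qed
qed

theorem lemma2:
  fixes a b :: "real ^ 'd" and \<epsilon> :: real and p :: ennreal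
    and M :: "'w measure" and I :: "(real ^ 'd \<Rightarrow> real) \<Rightarrow> 'w \<Rightarrow> real"
    and S :: "real ^ 'd \<Rightarrow> real ^ 'd \<Rightarrow> real" and F :: "real ^ 'd \<Rightarrow> real"
    and Z :: "real ^ 'd \<Rightarrow> 'w \<Rightarrow> real"
    and B :: "real ^ 'd \<Rightarrow> real" and Ft :: "real ^ 'd \<Rightarrow> 'w \<Rightarrow> real"
  assumes M: "prob_space M"
    and D: "cube0 \<subseteq> box a b"
    and eps: "0 < \<epsilon>" "\<epsilon> < 1"
    and p: "1 \<le> p"
    and W: "wiener_integral_on M (box a b) I"
    and S_meas: "(\<lambda>(t, x). S t x) \<in> borel_measurable (lebesgue_on (box a b) \<Otimes>\<^sub>M lebesgue_on cube0)"
    and S_L2: "\<forall>x\<in>cube0. L2_on (box a b) (\<lambda>t. S t x)"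
    and F_meas: "F \<in> borel_measurable (lebesgue_on (box a b))"
    and F_Lp: "Lp_norm p (box a b) F < \<infinity>"
    and F_L2: "Lp_norm 2 (box a b) F < \<infinity>"
    and Z_meas: "(\<lambda>(x, \<omega>). Z x \<omega>) \<in> borel_measurable (lebesgue_on cube0 \<Otimes>\<^sub>M M)"
    and Z_def: "\<forall>x\<in>cube0. AE \<omega> in M. Z x \<omega> = I (\<lambda>t. S t x) \<omega>"
    and B_def: "B = (\<lambda>x. (\<integral>t. S t x * F t \<partial>lebesgue_on (box a b)) - F x)"
    and Ft_def: "Ft = (\<lambda>x \<omega>. (\<integral>t. S t x * F t \<partial>lebesgue_on (box a b)) + \<epsilon> * Z x \<omega>)"
  shows "(1/4) * (Lp_norm p cube0 B + ennreal \<epsilon> * (\<integral>\<^sup>+ \<omega>. Lp_norm p cube0 (\<lambda>x. Z x \<omega>) \<partial>M))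
           \<le> (\<integral>\<^sup>+ \<omega>. Lp_norm p cube0 (\<lambda>x. Ft x \<omega> - F x) \<partial>M)
       \<and> (\<integral>\<^sup>+ \<omega>. Lp_norm p cube0 (\<lambda>x. Ft x \<omega> - F x) \<partial>M)
           \<le> Lp_norm p cube0 B + ennreal \<epsilon> * (\<integral>\<^sup>+ \<omega>. Lp_norm p cube0 (\<lambda>x. Z x \<omega>) \<partial>M)"
proof -
  interpret prob_space M by fact
  let ?N = "lebesgue_on cube0 :: (real ^ 'd) measure"
  let ?L = "lebesgue_on (box a b) :: (real ^ 'd) measure"
  have cube_borel: "cube0 \<in> sets borel" unfolding cube0_def by simp
  have sfN: "sigma_finite_measure ?N"
    by (rule sf_lebesgue_on[OF cube_borel]) (simp add: cube0_def emeasure_lborel_cbox_finite)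
  have sfL: "sigma_finite_measure ?L"
    by (rule sf_lebesgue_on) (simp, rule emeasure_lborel_box_finite)
  interpret NM: pair_sigma_finite ?N M
    using sfN by (simp add: pair_sigma_finite_def prob_space_imp_sigma_finite[OF M])
  have spaceN: "space ?N = cube0" by (simp add: space_restrict_space)
  have Sm': "(\<lambda>(x, t). S t x * F t) \<in> borel_measurable (?N \<Otimes>\<^sub>M ?L)"
  proof -
    have "(\<lambda>(t, x). S t x * F t) \<in> borel_measurable (?L \<Otimes>\<^sub>M ?N)"
    proof -
      have [measurable]: "F \<in> borel_measurable ?L" by (rule F_meas)
      have [measurable]: "(\<lambda>(t, x). S t x) \<in> borel_measurable (?L \<Otimes>\<^sub>M ?N)" by (rule S_meas)
      have "(\<lambda>z. (\<lambda>(t, x). S t x) z * F (fst z)) \<in> borel_measurable (?L \<Otimes>\<^sub>M ?N)" by measurable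
      then show ?thesis by (simp add: split_beta')
    qed
    from measurable_pair_swap[OF this] show ?thesis by simp
  qed
  have Im: "(\<lambda>x. \<integral>t. S t x * F t \<partial>?L) \<in> borel_measurable ?N"
    using sigma_finite_measure.borel_measurable_lebesgue_integral[OF sfL, of "\<lambda>x t. S t x * F t" ?N] Sm'
    by simp
  have FN: "F \<in> borel_measurable ?N"
    using measurable_restrict_mono[OF F_meas D] .
  have Bm[measurable]: "B \<in> borel_measurable ?N" unfolding B_def using Im FN by measurable
  have Zm[measurable]: "(\<lambda>(x, \<omega>). Z x \<omega>) \<in> borel_measurable (?N \<Otimes>\<^sub>M M)" by (rule Z_meas)
  define Y where "Y x \<omega> = B x + \<epsilon> * Z x \<omega>" for x \<omega>
  have Ym[measurable]: "(\<lambda>(x, \<omega>). Y x \<omega>) \<in> borel_measurable (?N \<Otimes>\<^sub>M M)"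
  proof -
    have "(\<lambda>z. B (fst z) + \<epsilon> * (\<lambda>(x, \<omega>). Z x \<omega>) z) \<in> borel_measurable (?N \<Otimes>\<^sub>M M)" by measurable
    then show ?thesis by (simp add: Y_def split_beta')
  qed
  have FtY: "(\<lambda>x. Ft x \<omega> - F x) = (\<lambda>x. Y x \<omega>)" for \<omega>
    by (simp add: Ft_def B_def Y_def algebra_simps)
  have Zx: "(\<lambda>x. Z x \<omega>) \<in> borel_measurable ?N" if "\<omega> \<in> space M" for \<omega>
    using measurable_Pair1[OF Zm that] by simp
  have Yx: "(\<lambda>x. Y x \<omega>) \<in> borel_measurable ?N" if "\<omega> \<in> space M" for \<omega>
    using measurable_Pair1[OF Ym that] by simp
  have Zint: "integrable M (Z x) \<and> (\<integral>\<omega>. Z x \<omega> \<partial>M) = 0" if x: "x \<in> space ?N" for x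
  proof (rule gauss_mean0[OF M W])
    show "L2_on (box a b) (\<lambda>t. S t x)" using S_L2 x spaceN by auto
    show "Z x \<in> borel_measurable M" using measurable_Pair2[OF Zm x] by simp
    show "AE \<omega> in M. Z x \<omega> = I (\<lambda>t. S t x) \<omega>" using Z_def x spaceN by auto
  qed
  have hZm: "(\<lambda>\<omega>. LP p ?N (\<lambda>x. Z x \<omega>)) \<in> borel_measurable M" by (rule measurable_LP[OF Zm sfN])
  have hYm: "(\<lambda>\<omega>. LP p ?N (\<lambda>x. Y x \<omega>)) \<in> borel_measurable M" by (rule measurable_LP[OF Ym sfN])
  define R where "R = (\<integral>\<^sup>+ \<omega>. LP p ?N (\<lambda>x. Y x \<omega>) \<partial>M)"
  define EZ where "EZ = (\<integral>\<^sup>+ \<omega>. LP p ?N (\<lambda>x. Z x \<omega>) \<partial>M)"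
  have scale: "LP p ?N (\<lambda>x. \<epsilon> * Z x \<omega>) = ennreal \<epsilon> * LP p ?N (\<lambda>x. Z x \<omega>)" if "\<omega> \<in> space M" for \<omega>
    by (rule LP_cmult[OF Zx[OF that] eps(1) p])
  have up: "R \<le> LP p ?N B + ennreal \<epsilon> * EZ"
  proof -
    have "R \<le> (\<integral>\<^sup>+ \<omega>. LP p ?N B + ennreal \<epsilon> * LP p ?N (\<lambda>x. Z x \<omega>) \<partial>M)"
      unfolding R_def
    proof (rule nn_integral_mono)
      fix \<omega> assume om: "\<omega> \<in> space M"
      have "LP p ?N (\<lambda>x. Y x \<omega>) \<le> LP p ?N B + LP p ?N (\<lambda>x. \<epsilon> * Z x \<omega>)"
        unfolding Y_def by (rule LP_add[OF Bm _ p]) (use Zx[OF om] in measurable)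
      then show "LP p ?N (\<lambda>x. Y x \<omega>) \<le> LP p ?N B + ennreal \<epsilon> * LP p ?N (\<lambda>x. Z x \<omega>)"
        using scale[OF om] by simp
    qed
    also have "\<dots> = LP p ?N B + ennreal \<epsilon> * EZ"
      using hZm unfolding EZ_def
      by (subst nn_integral_add) (auto simp: nn_integral_cmult emeasure_space_1)
    finally show ?thesis .
  qed
  have lowB: "LP p ?N B \<le> R"
    unfolding R_def
  proof (rule minkowski_integral[OF M sfN Ym Bm _ _ p])
    fix x assume x: "x \<in> space ?N"
    have zi: "integrable M (Z x)" and z0: "(\<integral>\<omega>. Z x \<omega> \<partial>M) = 0" using Zint[OF x] by auto
    show "integrable M (Y x)" unfolding Y_def using zi by auto
    show "B x = (\<integral>\<omega>. Y x \<omega> \<partial>M)" unfolding Y_def using zi z0 by (simp add: emeasure_space_1 prob_space)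
  qed
  have lowZ: "ennreal \<epsilon> * EZ \<le> R + LP p ?N B"
  proof -
    have "ennreal \<epsilon> * EZ = (\<integral>\<^sup>+ \<omega>. ennreal \<epsilon> * LP p ?N (\<lambda>x. Z x \<omega>) \<partial>M)"
      unfolding EZ_def using hZm by (simp add: nn_integral_cmult)
    also have "\<dots> \<le> (\<integral>\<^sup>+ \<omega>. LP p ?N (\<lambda>x. Y x \<omega>) + LP p ?N B \<partial>M)"
    proof (rule nn_integral_mono)
      fix \<omega> assume om: "\<omega> \<in> space M"
      have "LP p ?N (\<lambda>x. \<epsilon> * Z x \<omega>) = LP p ?N (\<lambda>x. Y x \<omega> + - B x)"
        unfolding Y_def by simp
      also have "\<dots> \<le> LP p ?N (\<lambda>x. Y x \<omega>) + LP p ?N (\<lambda>x. - B x)"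
        by (rule LP_add[OF Yx[OF om] _ p]) measurable
      finally show "ennreal \<epsilon> * LP p ?N (\<lambda>x. Z x \<omega>) \<le> LP p ?N (\<lambda>x. Y x \<omega>) + LP p ?N B"
        using scale[OF om] by (simp add: LP_uminus)
    qed
    also have "\<dots> = R + LP p ?N B"
      using hYm unfolding R_def
      by (subst nn_integral_add) (auto simp: emeasure_space_1)
    finally show ?thesis .
  qed
  have sum3: "LP p ?N B + ennreal \<epsilon> * EZ \<le> 3 * R"
  proof -
    have "LP p ?N B + ennreal \<epsilon> * EZ \<le> R + (R + R)"
      using lowB lowZ by (intro add_mono order.trans[OF lowZ]) auto
    also have "\<dots> = (1 + 1 + 1) * R" by (simp only: distrib_right mult_1_left add.assoc)
    also have "(1 + 1 + 1 :: ennreal) = 3" by simp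
    finally show ?thesis .
  qed
  have "(1/4) * (LP p ?N B + ennreal \<epsilon> * EZ) \<le> (1/4) * (3 * R)"
    using sum3 by (rule mult_left_mono) simp
  also have "\<dots> \<le> R"
  proof -
    have "(1/4) * (3 * R) = ((1/4) * 3) * R" by (simp add: mult.assoc)
    also have "(1/4::ennreal) * 3 \<le> 1"
    proof -
      have e: "(1/4::ennreal) = ennreal (1/4)"
        by (metis divide_ennreal ennreal_1 ennreal_numeral zero_le_one zero_less_numeral)
      have "ennreal (1/4) * 3 = ennreal (3/4)"
        by (metis ennreal_mult'' ennreal_numeral numeral_One times_divide_eq_left mult_1 zero_le_numeral)
      then show ?thesis unfolding e by simp
    qed
    then have "((1/4) * 3) * R \<le> 1 * R" by (rule mult_right_mono) simp
    finally show ?thesis by simp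
  qed
  finally have low: "(1/4) * (LP p ?N B + ennreal \<epsilon> * EZ) \<le> R" .
  show ?thesis using low up unfolding R_def EZ_def FtY Lp_norm_LP by simp
qed


end
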